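(* Water-Filling is at most $(2-\sqrt2)$-competitive for the fully online fractional matching problem, even on bipartite graphs: for every $\varepsilon>0$ there is a bipartite instance on which Water-Filling produces a fractional matching $x$ with $\sum_{e}x_e\le(2-\sqrt2+\varepsilon)\cdot\mathrm{OPT}$, where $\mathrm{OPT}$ is the maximum matching size (in fact the instance $G_{k,m}$ of the context achieves ratio tending to $2-\sqrt2$ as $m\to\infty$ and then $k\to\infty$).
   Context: Fully online fractional matching model: an undirected graph is revealed online; each step is the arrival or the deadline of a vertex; at arrival, edges to previously arrived vertices are revealed; every neighbor of $v$ arrives before $v$'s deadline. The algorithm maintains $x_{uv}\ge 0$ with water-level $x_w:=\sum_{z}x_{wz}\le1$; $x_{uv}$ (with $u$ having the earlier deadline) may only be increased at $u$'s deadline. Water-Filling: at the deadline of $u$, with $N(u)$ the neighbors of $u$ whose deadlines have not been reached, while $x_u<1$ and $\min_{v\in N(u)}x_v<1$, continuously increase $x_{uv}$ at equal rates for all $v\in\arg\min_{v\in N(u)}x_v$. Let $c=2-\sqrt2$, $f(x)=\tfrac12(\ln(1-x)+\ln(1-c+x))+\frac{1}{\sqrt2(x-1)}+\frac{2+\sqrt2-\ln(1-c)}{2}$ on $[0,c]$ (a strictly decreasing bijection onto $[0,1]$), and $h(x)=f(c-f^{-1}(x))$ for $x\in[0,1]$. Hard instance $G_{k,m}$: vertex set $\bigcup_{t\in[m]}(U_t\cup V_t)$ with $U_t=\{u_{t,1},\dots,u_{t,k}\}$, $V_t=\{v_{t,1},\dots,v_{t,k}\}$. Edges: $(u_{t,i},v_{t,j})$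 for all $t\in[m]$, $i\in[k]$, $j\ge i$; and $(u_{t,i},u_{t+1,j})$ for all $t\in[m-1]$, $i\in[k]$, $1\le j\le\lfloor k\,h(\tfrac{i-1}{k})\rfloor$. All vertices arrive before any deadline. The deadlines of the $u$-vertices come first, in lexicographic order of $(t,i)$; afterwards the deadlines of all $v$-vertices are reached (in any order). This graph is bipartite and has a perfect matching $\{(u_{t,i},v_{t,i})\}$, so $\mathrm{OPT}=km$. *)

theory Defs
  imports Complex_Main
begin

datatype 'a event = Arrival 'a | Deadline 'a

definition before :: "'a event list \<Rightarrow> 'a event \<Rightarrow> 'a event \<Rightarrow> bool" where
  "before evs a b \<longleftrightarrow> (\<exists>i j. i < j \<and> j < length evs \<and> evs ! i = a \<and> evs ! j = b)"

definition online_instance :: "'a set \<Rightarrow> 'a set set \<Rightarrow> 'a event list \<Rightarrow> bool" where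
  "online_instance V E evs \<longleftrightarrow>
     finite V \<and>
     E \<subseteq> {{u, v} | u v. u \<in> V \<and> v \<in> V \<and> u \<noteq> v} \<and>
     distinct evs \<and>
     set evs = Arrival ` V \<union> Deadline ` V \<and>
     (\<forall>v\<in>V. before evs (Arrival v) (Deadline v)) \<and>
     (\<forall>u v. {u, v} \<in> E \<longrightarrow> before evs (Arrival u) (Deadline v))"

definition level :: "'a set set \<Rightarrow> ('a set \<Rightarrow> real) \<Rightarrow> 'a \<Rightarrow> real" where
  "level E x w = (\<Sum>e\<in>{e\<in>E. w \<in> e}. x e)"

text \<open>One Water-Filling step at the deadline of u, with N the set of neighbours
of u whose deadlines have not been reached.  The continuous process raises the
lowest levels in N equally; its outcome is: for a final water level L \<le> 1,
each v in N receives max 0 (L - x_v); the process stops when x_u reaches 1, or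
all levels in N reach 1 (L = 1), or N is empty.\<close>
definition wf_step :: "'a set set \<Rightarrow> 'a set \<Rightarrow> 'a \<Rightarrow> ('a set \<Rightarrow> real) \<Rightarrow> ('a set \<Rightarrow> real) \<Rightarrow> bool" where
  "wf_step E N u x x' \<longleftrightarrow>
     (\<exists>L::real. L \<le> 1 \<and>
        level E x u + (\<Sum>v\<in>N. max 0 (L - level E x v)) \<le> 1 \<and>
        (level E x u + (\<Sum>v\<in>N. max 0 (L - level E x v)) = 1 \<or> L = 1 \<or> N = {}) \<and>
        x' = (\<lambda>e. x e + (\<Sum>v\<in>N. if e = {u, v} then max 0 (L - level E x v) else 0)))"

inductive wf_run :: "'a set set \<Rightarrow> 'a event list \<Rightarrow> ('a set \<Rightarrow> real) \<Rightarrow> ('a set \<Rightarrow> real) \<Rightarrow> bool"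
  for E where
  wf_nil: "wf_run E [] x x"
| wf_arr: "wf_run E es x x' \<Longrightarrow> wf_run E (Arrival v # es) x x'"
| wf_dl: "wf_step E {v. {u, v} \<in> E \<and> Deadline v \<in> set es} u x x' \<Longrightarrow> wf_run E es x' x''
          \<Longrightarrow> wf_run E (Deadline u # es) x x''"

definition bipartite :: "'a set set \<Rightarrow> bool" where
  "bipartite E \<longleftrightarrow> (\<exists>A. \<forall>e\<in>E. card (e \<inter> A) = 1)"

definition matching :: "'a set set \<Rightarrow> 'a set set \<Rightarrow> bool" where
  "matching E M \<longleftrightarrow> M \<subseteq> E \<and> (\<forall>e1\<in>M. \<forall>e2\<in>M. e1 \<noteq> e2 \<longrightarrow> e1 \<inter> e2 = {})"

definition max_matching_size :: "'a set set \<Rightarrow> nat" where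
  "max_matching_size E = Max (card ` {M. matching E M})"

end

theory Submission
  imports Defs
begin


definition s0 :: real where "s0 = sqrt 2 / 2"
definition a0 :: real where "a0 = 1 - s0"

definition Ff :: "real \<Rightarrow> real" where
  "Ff t = - ln t / 2 - ln (1 - t) / 2 + 1 / (2 * (1 - t))"
definition Fd :: "real \<Rightarrow> real" where
  "Fd t = (1 - 2 * (1 - t)^2) / (2 * t * (1 - t)^2)"
definition Zf :: "real \<Rightarrow> real" where "Zf w = Ff s0 - Ff w"
definition Yt :: "real \<Rightarrow> real" where "Yt w = w + (1/2 - w) / (1 - w)"

lemma s0_sq: "s0^2 = 1/2"
  unfolding s0_def by (simp add: power_divide)

lemma s0_bounds: "0.7 < s0" "s0 < 0.71"
proof -
  have "sqrt 2 > 1.4" by (rule real_less_rsqrt) (simp add: power2_eq_square)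
  then show "0.7 < s0" unfolding s0_def by simp
  have "sqrt 2 < sqrt (1.42^2)" by (rule real_sqrt_less_mono) (simp add: power2_eq_square)
  moreover have "sqrt (1.42^2) = (1.42::real)" by (rule real_sqrt_unique) auto
  ultimately have "sqrt 2 < 1.42" by simp
  then show "s0 < 0.71" unfolding s0_def by simp
qed

lemma a0_bounds: "0.29 < a0" "a0 < 0.3" using s0_bounds unfolding a0_def by auto

lemma Ff_deriv: assumes "0 < t" "t < 1" shows "(Ff has_real_derivative Fd t) (at t)"
  unfolding Ff_def Fd_def using assms
  apply (auto intro!: derivative_eq_intros)
  apply (subgoal_tac "1 - t \<noteq> 0 \<and> 4 - t*4 \<noteq> 0 \<and> 2 - 2*t \<noteq> 0")
   apply (simp add: divide_simps power2_eq_square)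
   apply (simp add: algebra_simps)
  apply auto
  done


lemma basic: "a0 + s0 = 1" "0 < a0" "a0 < s0" "s0 < 1" "0 < s0"
  using s0_bounds a0_bounds unfolding a0_def by auto

lemma Fd_nonneg: assumes "a0 \<le> t" "t \<le> s0" shows "0 \<le> Fd t"
proof -
  have "0 \<le> 1 - t" "1 - t \<le> s0" using assms basic by auto
  then have "(1-t)^2 \<le> s0^2" by (intro power_mono) auto
  then have "1 - 2*(1-t)^2 \<ge> 0" using s0_sq by simp
  moreover have "t > 0" "1 - t > 0" using assms basic by auto
  ultimately show ?thesis unfolding Fd_def by simp
qed

lemma Fd_pos: assumes "a0 < t" "t < s0" shows "0 < Fd t"
proof -
  have "0 \<le> 1 - t" "1 - t < s0" using assms basic by auto
  then have "(1-t)^2 < s0^2" by (simp add: power_strict_mono)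
  then have "1 - 2*(1-t)^2 > 0" using s0_sq by simp
  moreover have "t > 0" "1 - t > 0" using assms basic by auto
  ultimately show ?thesis unfolding Fd_def by simp
qed

lemma Ff_strict: assumes "a0 \<le> p" "p < q" "q \<le> s0" shows "Ff p < Ff q"
proof (rule DERIV_pos_imp_increasing_open[OF assms(2)])
  fix x assume "p < x" "x < q"
  then show "\<exists>y. DERIV Ff x :> y \<and> 0 < y"
    using assms basic by (intro exI[of _ "Fd x"]) (auto intro!: Ff_deriv Fd_pos)
next
  show "continuous_on {p..q} Ff"
    using assms basic
    by (intro continuous_at_imp_continuous_on ballI DERIV_isCont[OF Ff_deriv]) auto
qed

lemma Ff_mono: assumes "a0 \<le> p" "p \<le> q" "q \<le> s0" shows "Ff p \<le> Ff q"
  using Ff_strict[OF assms(1) _ assms(3)] assms(2) by (cases "p = q") auto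

lemma Ff_sym: assumes "0 < w" "w < 1" shows "Ff (1-w) - Ff w = 1/(2*w) - 1/(2*(1-w))"
  unfolding Ff_def using assms by simp

lemma Zf_s0: "Zf s0 = 0" unfolding Zf_def by simp

lemma Zf_a0: "Zf a0 = 1"
proof -
  have "Zf a0 = Ff (1 - a0) - Ff a0" unfolding Zf_def using basic by (simp add: a0_def)
  also have "\<dots> = 1/(2*a0) - 1/(2*(1-a0))" using basic by (intro Ff_sym) auto
  also have "\<dots> = 1"
  proof -
    have "1 - a0 = s0" unfolding a0_def by simp
    moreover have "a0 * s0 = s0 - 1/2" unfolding a0_def using s0_sq by (simp add: algebra_simps power2_eq_square)
    moreover have "2 * (a0*a0) - 4*a0 + 1 = 0" unfolding a0_def using s0_sq by (simp add: algebra_simps power2_eq_square)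
    ultimately show ?thesis using basic by (simp add: divide_simps) (simp add: algebra_simps)
  qed
  finally show ?thesis .
qed

lemma Zf_strict: "a0 \<le> p \<Longrightarrow> p < q \<Longrightarrow> q \<le> s0 \<Longrightarrow> Zf q < Zf p"
  unfolding Zf_def using Ff_strict by simp

lemma Zf_mono: "a0 \<le> p \<Longrightarrow> p \<le> q \<Longrightarrow> q \<le> s0 \<Longrightarrow> Zf q \<le> Zf p"
  unfolding Zf_def using Ff_mono by simp

lemma Zf_range: assumes "a0 \<le> w" "w \<le> s0" shows "0 \<le> Zf w" "Zf w \<le> 1"
  using Zf_mono[of w s0] Zf_mono[of a0 w] assms Zf_s0 Zf_a0 basic
  by auto

lemma Zf_cont: assumes "a0 \<le> t" "t \<le> s0" shows "isCont Zf t"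
  unfolding Zf_def using assms basic by (intro continuous_intros DERIV_isCont[OF Ff_deriv]) auto

definition Wf :: "real \<Rightarrow> real" where "Wf x = (THE w. a0 \<le> w \<and> w \<le> s0 \<and> Zf w = x)"

lemma Wf_ex: assumes "0 \<le> x" "x \<le> 1" shows "\<exists>w. a0 \<le> w \<and> w \<le> s0 \<and> Zf w = x"
  using IVT2[of Zf s0 x a0] assms Zf_s0 Zf_a0 basic Zf_cont by auto

lemma Zf_inj: "a0 \<le> p \<Longrightarrow> p \<le> s0 \<Longrightarrow> a0 \<le> q \<Longrightarrow> q \<le> s0 \<Longrightarrow> Zf p = Zf q \<Longrightarrow> p = q"
  using Zf_strict by (metis less_irrefl linorder_neqE_linordered_idom)

lemma Wf: assumes "0 \<le> x" "x \<le> 1" shows "a0 \<le> Wf x" "Wf x \<le> s0" "Zf (Wf x) = x"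
proof -
  have "a0 \<le> Wf x \<and> Wf x \<le> s0 \<and> Zf (Wf x) = x"
    unfolding Wf_def by (rule theI') (use Wf_ex[OF assms] Zf_inj in blast)
  then show "a0 \<le> Wf x" "Wf x \<le> s0" "Zf (Wf x) = x" by auto
qed

lemma Wf_Zf: assumes "a0 \<le> w" "w \<le> s0" shows "Wf (Zf w) = w"
  using Wf[of "Zf w"] Zf_range[OF assms] Zf_inj assms by metis

lemma Wf_anti: assumes "0 \<le> x" "x \<le> x'" "x' \<le> 1" shows "Wf x' \<le> Wf x"
proof (rule ccontr)
  assume "\<not> Wf x' \<le> Wf x"
  then have "Zf (Wf x') < Zf (Wf x)" using Wf[of x] Wf[of x'] assms by (intro Zf_strict) auto
  then show False using Wf[of x] Wf[of x'] assms by auto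
qed

lemma g_deriv: assumes "0 < t" "t < 1"
  shows "((\<lambda>t. Yt t - c * Zf t) has_real_derivative (c - t) * Fd t) (at t)"
proof -
  have "((\<lambda>t. Yt t - c * Zf t) has_real_derivative
      (1 + (-1 * (1 - t) - (1/2 - t) * (-1)) / (1-t)^2) - c * (0 - Fd t)) (at t)"
    unfolding Yt_def Zf_def using assms
    by (auto intro!: derivative_eq_intros Ff_deriv simp: power2_eq_square)
  moreover have "(1 + (-1 * (1 - t) - (1/2 - t) * (-1)) / (1-t)^2) - c * (0 - Fd t) = (c - t) * Fd t"
    using assms unfolding Fd_def by (simp add: divide_simps power2_eq_square) (simp add: algebra_simps)
  ultimately show ?thesis by simp
qed

lemma chord: assumes "a0 \<le> w" "w \<le> w'" "w' \<le> s0"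
  shows "w * (Zf w - Zf w') \<le> Yt w - Yt w'" "Yt w - Yt w' \<le> w' * (Zf w - Zf w')"
proof -
  have "Yt w' - w * Zf w' \<le> Yt w - w * Zf w"
  proof (rule DERIV_nonpos_imp_nonincreasing[OF assms(2)])
    fix t assume "w \<le> t" "t \<le> w'"
    then show "\<exists>y. DERIV (\<lambda>t. Yt t - w * Zf t) t :> y \<and> y \<le> 0"
      using assms basic Fd_nonneg[of t]
      by (intro exI[of _ "(w - t) * Fd t"]) (auto intro!: g_deriv mult_nonpos_nonneg)
  qed
  then show "w * (Zf w - Zf w') \<le> Yt w - Yt w'" by (simp add: algebra_simps)
  have "Yt w - w' * Zf w \<le> Yt w' - w' * Zf w'"
  proof (rule DERIV_nonneg_imp_nondecreasing[OF assms(2)])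
    fix t assume "w \<le> t" "t \<le> w'"
    then show "\<exists>y. DERIV (\<lambda>t. Yt t - w' * Zf t) t :> y \<and> y \<ge> 0"
      using assms basic Fd_nonneg[of t]
      by (intro exI[of _ "(w' - t) * Fd t"]) (auto intro!: g_deriv)
  qed
  then show "Yt w - Yt w' \<le> w' * (Zf w - Zf w')" by (simp add: algebra_simps)
qed


definition Yf :: "real \<Rightarrow> real" where "Yf x = Yt (Wf x)"
definition hf :: "real \<Rightarrow> real" where "hf x = Zf (1 - Wf x)"

lemma Yf_chord: assumes "0 \<le> x'" "x' \<le> x" "x \<le> 1"
  shows "Wf x * (x - x') \<le> Yf x - Yf x'" "Yf x - Yf x' \<le> Wf x' * (x - x')"
proof -
  have w: "a0 \<le> Wf x" "Wf x \<le> Wf x'" "Wf x' \<le> s0" "Zf (Wf x) = x" "Zf (Wf x') = x'"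
    using Wf[of x] Wf[of x'] Wf_anti[of x' x] assms by auto
  show "Wf x * (x - x') \<le> Yf x - Yf x'" "Yf x - Yf x' \<le> Wf x' * (x - x')"
    using chord[OF w(1-3)] w(4,5) unfolding Yf_def by auto
qed

lemma Yf_0: "Yf 0 = 0"
proof -
  have "Wf 0 = s0" using Wf_Zf[of s0] Zf_s0 basic by simp
  moreover have "Yt s0 = 0"
  proof -
    have "1 - s0 \<noteq> 0" using basic by simp
    then show ?thesis unfolding Yt_def using s0_sq by (simp add: divide_simps power2_eq_square) (simp add: algebra_simps)
  qed
  ultimately show ?thesis unfolding Yf_def by simp
qed

lemma Yf_1: "Yf 1 = 2 - sqrt 2"
proof -
  have "Wf 1 = a0" using Wf_Zf[of a0] Zf_a0 basic by simp
  moreover have "Yt a0 = 2 - sqrt 2"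
  proof -
    have "1 - a0 = s0" unfolding a0_def by simp
    moreover have "sqrt 2 = 2 * s0" unfolding s0_def by simp
    ultimately show ?thesis unfolding Yt_def using s0_sq basic
      by (simp add: divide_simps power2_eq_square a0_def) (simp add: algebra_simps)
  qed
  ultimately show ?thesis unfolding Yf_def by simp
qed

lemma Yf_mono: assumes "0 \<le> x'" "x' \<le> x" "x \<le> 1" shows "Yf x' \<le> Yf x"
proof -
  have "0 \<le> Wf x * (x - x')" using Wf[of x] assms basic by auto
  then show ?thesis using Yf_chord[OF assms] by linarith
qed

lemma hf_range: assumes "0 \<le> x" "x \<le> 1" shows "0 \<le> hf x" "hf x \<le> 1"
  unfolding hf_def using Wf[OF assms] basic by (auto intro!: Zf_range)

lemma hf_anti: assumes "0 \<le> x" "x \<le> x'" "x' \<le> 1" shows "hf x' \<le> hf x"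
  unfolding hf_def using Wf[of x] Wf[of x'] Wf_anti[OF assms] assms basic
  by (intro Zf_mono) auto

lemma tangent: assumes "0 \<le> x" "x \<le> 1"
  shows "Yf (hf x) = (1 - Wf x) * (1 - x + hf x)"
proof -
  define w where "w = Wf x"
  have w: "a0 \<le> w" "w \<le> s0" "Zf w = x" using Wf[OF assms] w_def by auto
  have w1: "a0 \<le> 1 - w" "1 - w \<le> s0" using w basic by auto
  have "Wf (hf x) = 1 - w" unfolding hf_def w_def[symmetric] using Wf_Zf[OF w1] .
  then have "Yf (hf x) = Yt (1 - w)" unfolding Yf_def by simp
  moreover have "1 - x + hf x = 1 - (1/(2*w) - 1/(2*(1-w)))"
  proof -
    have "hf x - x = Ff w - Ff (1 - w)" unfolding hf_def w_def[symmetric] using w(3) unfolding Zf_def by auto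
    also have "\<dots> = -(1/(2*w) - 1/(2*(1-w)))" using Ff_sym[of w] w basic by simp
    finally show ?thesis by simp
  qed
  moreover have "Yt (1 - w) = (1 - w) * (1 - (1/(2*w) - 1/(2*(1-w))))"
  proof -
    have "w > 0" "1 - w > 0" using w basic by auto
    then show ?thesis unfolding Yt_def by (simp add: divide_simps) (simp add: algebra_simps)
  qed
  ultimately show ?thesis using w_def by simp
qed




lemma discrete:
  fixes \<epsilon> :: real assumes "\<epsilon> > 0"
  shows "\<exists>(k::nat) (H::nat\<Rightarrow>nat) (y::nat\<Rightarrow>real). k > 0 \<and> (\<forall>i j. i \<le> j \<longrightarrow> j < k \<longrightarrow> H j \<le> H i) \<and>
     (\<forall>i<k. H i \<le> k) \<and> (\<forall>i<k. 0 \<le> y i \<and> y i \<le> 1) \<and>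
     (\<forall>i<k. real (k - i + H i) * y i + (\<Sum>j<H i. y j) \<ge> real (k - i + H i)) \<and>
     (\<Sum>j<k. y j) \<le> (2 - sqrt 2 + \<epsilon>) * k"
proof -
  define \<delta> where "\<delta> = min (\<epsilon>/4) (1/4)"
  have d: "0 < \<delta>" "\<delta> \<le> \<epsilon>/4" "\<delta> \<le> 1/4" using assms unfolding \<delta>_def by auto
  define k :: nat where "k = nat \<lceil>4/\<epsilon> + 4/(\<delta>*\<delta>)\<rceil> + 1"
  have kpos: "k > 0" unfolding k_def by simp
  have kr: "real k > 0" using kpos by simp
  have k1: "real k \<ge> 4/\<epsilon>" "real k \<ge> 4/(\<delta>*\<delta>)"
  proof -
    have "4/\<epsilon> + 4/(\<delta>*\<delta>) \<le> real k" unfolding k_def by linarith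
    moreover have "4/\<epsilon> \<ge> 0" "4/(\<delta>*\<delta>) \<ge> 0" using assms d by auto
    ultimately show "real k \<ge> 4/\<epsilon>" "real k \<ge> 4/(\<delta>*\<delta>)" by linarith+
  qed
  have kdd: "real k * \<delta> * \<delta> \<ge> 4" using k1(2) d by (simp add: divide_simps mult.commute mult.left_commute)
  have ke: "1 / real k \<le> \<epsilon>/4" using k1(1) assms kr by (simp add: divide_simps mult.commute)
  define lm where "lm = 1 + \<delta>"
  define K0 :: nat where "K0 = nat \<lfloor>real k * (1 - \<delta>)\<rfloor>"
  have K0k: "K0 \<le> k"
  proof -
    have "real k * (1 - \<delta>) \<le> real k" using d kr by (simp add: algebra_simps)
    then have "\<lfloor>real k * (1 - \<delta>)\<rfloor> \<le> int k" by (metis floor_mono floor_of_nat)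
    then show ?thesis unfolding K0_def by simp
  qed
  have K0r: "real K0 \<le> real k * (1 - \<delta>)" "real k * (1 - \<delta>) - 1 < real K0"
    unfolding K0_def using d kr by (auto simp: of_nat_nat)
  define D where "D j = Yf (real (Suc j) / k) - Yf (real j / k)" for j
  define y where "y j = (if j < K0 then lm * k * D j else 1)" for j
  define H where "H i = (if i < K0 then nat \<lfloor>real k * hf (real (Suc i) / k)\<rfloor> else 0)" for i
  have Dbnd: "Wf (real (Suc j)/k) / k \<le> D j \<and> D j \<le> s0 / k" if "j < k" for j
  proof -
    have a: "0 \<le> real j / k" "real j / k \<le> real (Suc j) / k" "real (Suc j)/k \<le> 1"
      using that kr by (auto simp: divide_simps)
    have e: "real (Suc j) / k - real j / k = 1 / k" using kr by (simp add: divide_simps)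
    show ?thesis using Yf_chord[OF a] e Wf[of "real j / k"] a unfolding D_def
      by (auto simp: divide_simps mult.commute intro: order.trans)
  qed
  have D0: "0 \<le> D j" if "j < k" for j
  proof -
    have "0 \<le> Wf (real (Suc j)/k) / k" using Wf[of "real (Suc j)/k"] basic kr that by (auto simp: divide_simps)
    then show ?thesis using Dbnd[OF that] by linarith
  qed
  have lam: "lm * s0 \<le> 1"
  proof -
    have "\<delta> * s0 \<le> \<delta>" using d s0_bounds by (simp add: mult_left_le)
    moreover have "lm * s0 = s0 + \<delta> * s0" unfolding lm_def by (simp add: algebra_simps)
    moreover have "s0 \<le> 3/4" using s0_bounds by simp
    ultimately show ?thesis using d by linarith
  qed
  have lkD: "lm * k * D j \<le> 1" if "j < k" for j
  proof -
    have "lm * k * D j \<le> lm * k * (s0 / k)" using Dbnd[OF that] d kr unfolding lm_def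
      by (intro mult_left_mono) auto
    then show ?thesis using lam kr by simp
  qed
  have ygeD: "y j \<ge> lm * k * D j" if "j < k" for j unfolding y_def using lkD[OF that] by auto
  have yb: "0 \<le> y j \<and> y j \<le> 1" if "j < k" for j
    unfolding y_def using D0[OF that] lkD[OF that] d kr unfolding lm_def by auto
  have sumY: "(\<Sum>j<h. y j) \<ge> lm * k * Yf (real h / k)" if "h \<le> k" for h
  proof -
    have "(\<Sum>j<h. y j) \<ge> (\<Sum>j<h. lm * k * D j)" using ygeD that by (intro sum_mono) auto
    moreover have "(\<Sum>j<h. lm * k * D j) = lm * k * Yf (real h / k)"
      unfolding D_def sum_distrib_left[symmetric] using sum_lessThan_telescope[of "\<lambda>j. Yf (real j / k)" h] Yf_0
      by simp
    ultimately show ?thesis by simp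
  qed
  have Hmono: "\<forall>i j. i \<le> j \<longrightarrow> j < k \<longrightarrow> H j \<le> H i"
  proof (intro allI impI)
    fix i j :: nat assume ij: "i \<le> j" "j < k"
    show "H j \<le> H i"
    proof (cases "j < K0")
      case True
      then have "Suc j \<le> k" using K0k by simp
      then have "hf (real (Suc j) / k) \<le> hf (real (Suc i) / k)"
        using ij kr by (intro hf_anti) (auto simp: divide_simps)
      then have "real k * hf (real (Suc j) / k) \<le> real k * hf (real (Suc i) / k)" using kr by simp
      then show ?thesis unfolding H_def using True ij by (auto intro!: nat_mono floor_mono)
    qed (simp add: H_def)
  qed
  have Hk: "\<forall>i<k. H i \<le> k"
  proof (intro allI impI)
    fix i assume "i < k"
    show "H i \<le> k"
    proof (cases "i < K0")
      case True
      then have "real (Suc i) / k \<le> 1" using K0k kr by (simp add: divide_simps)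
      then have "hf (real (Suc i) / k) \<le> 1" by (intro hf_range) auto
      then have "real k * hf (real (Suc i) / k) \<le> real k" using kr by simp
      then have "\<lfloor>real k * hf (real (Suc i) / k)\<rfloor> \<le> int k" by (metis floor_mono floor_of_nat)
      then show ?thesis unfolding H_def using True by simp
    qed (simp add: H_def)
  qed
  have dual: "\<forall>i<k. real (k - i + H i) * y i + (\<Sum>j<H i. y j) \<ge> real (k - i + H i)"
  proof (intro allI impI)
    fix i assume ik: "i < k"
    show "real (k - i + H i) * y i + (\<Sum>j<H i. y j) \<ge> real (k - i + H i)"
    proof (cases "i < K0")
      case False
      then have "H i = 0" by (simp add: H_def)
      then show ?thesis using False by (simp add: y_def)
    next
      case True
      define x where "x = real (Suc i) / k"
      define w where "w = Wf x"
      define hh where "hh = hf x"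
      have x: "0 \<le> x" "x \<le> 1 - \<delta>" unfolding x_def using K0r True kr
        by (auto simp: divide_simps mult.commute)
      have x1: "x \<le> 1" using x d by linarith
      have w: "a0 \<le> w" "w \<le> s0" using Wf[OF x(1) x1] w_def by auto
      have hh: "0 \<le> hh" "hh \<le> 1" using hf_range[OF x(1) x1] hh_def by auto
      have Hi: "H i = nat \<lfloor>real k * hh\<rfloor>" unfolding H_def hh_def x_def using True by simp
      define Dn where "Dn = 1 - x + hh"
      have Dn: "Dn \<ge> \<delta>" unfolding Dn_def using x hh by linarith
      have Hr: "real (H i) \<le> real k * hh" "real k * hh - 1 < real (H i)"
        unfolding Hi using hh kr by (auto simp: of_nat_nat)
      define n where "n = real (k - i + H i)"
      have nr: "n = real k - real i + real (H i)" unfolding n_def using ik by simp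
      have kx: "real k * x = real i + 1" unfolding x_def using kr by simp
      have n1: "n \<le> real k * Dn + 1" "n \<ge> real k * Dn"
        unfolding nr Dn_def using Hr kx by (simp_all add: algebra_simps)
      have nbig: "n * \<delta> \<ge> 2 * lm"
      proof -
        have "real k * Dn \<ge> real k * \<delta>" using Dn kr by simp
        then have "n \<ge> real k * \<delta>" using n1 by linarith
        then have "n * \<delta> \<ge> real k * \<delta> * \<delta>" using d by (simp add: mult_right_mono)
        moreover have "2 * lm \<le> 4" unfolding lm_def using d by simp
        ultimately show ?thesis using kdd by linarith
      qed
      have yi: "y i \<ge> lm * w"
      proof -
        have "Wf x / k \<le> D i" using Dbnd[OF ik] x_def by simp
        then have "real k * D i \<ge> w" using kr w_def by (simp add: divide_simps mult.commute)
        then have "lm * (real k * D i) \<ge> lm * w" using d unfolding lm_def by (intro mult_left_mono) auto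
        then show ?thesis unfolding y_def using True by (simp add: mult.assoc)
      qed
      have HK: "H i \<le> k" using Hk ik by simp
      have S: "(\<Sum>j<H i. y j) \<ge> lm * (real k * Yf hh - 1)"
      proof -
        define \<eta> where "\<eta> = real (H i) / k"
        have ke: "real k * (hh - \<eta>) = real k * hh - real (H i)" unfolding \<eta>_def using kr
          by (simp add: algebra_simps)
        have eta: "0 \<le> \<eta>" "\<eta> \<le> hh" "real k * (hh - \<eta>) \<le> 1"
          unfolding ke using Hr kr by (auto simp: \<eta>_def divide_simps algebra_simps)
        have "Yf hh - Yf \<eta> \<le> Wf \<eta> * (hh - \<eta>)" using Yf_chord(2)[OF eta(1,2) hh(2)] .
        moreover have "Wf \<eta> * (hh - \<eta>) \<le> 1 * (hh - \<eta>)"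
          using Wf[of \<eta>] eta hh basic by (intro mult_right_mono) auto
        ultimately have "Yf hh - Yf \<eta> \<le> hh - \<eta>" by simp
        then have "real k * (Yf hh - Yf \<eta>) \<le> 1" using eta(3) kr
          by (smt (verit) mult_left_mono)
        then have "real k * Yf \<eta> \<ge> real k * Yf hh - 1" by (simp add: algebra_simps)
        then have "lm * (real k * Yf \<eta>) \<ge> lm * (real k * Yf hh - 1)"
          using d unfolding lm_def by (intro mult_left_mono) auto
        moreover have "(\<Sum>j<H i. y j) \<ge> lm * k * Yf \<eta>" using sumY[OF HK] \<eta>_def by simp
        ultimately show ?thesis by (simp add: mult.assoc)
      qed
      have tg: "Yf hh = (1 - w) * Dn" using tangent[OF x(1) x1] unfolding hh_def w_def Dn_def .
      have "real k * Yf hh \<ge> (1 - w) * (n - 1)"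
      proof -
        have "real k * Yf hh = (1 - w) * (real k * Dn)" unfolding tg by (simp add: algebra_simps)
        moreover have "(1 - w) * (real k * Dn) \<ge> (1 - w) * (n - 1)"
          using n1 w basic by (intro mult_left_mono) auto
        ultimately show ?thesis by linarith
      qed
      moreover have "n * y i \<ge> n * (lm * w)" using yi
        by (intro mult_left_mono) (auto simp: n_def)
      ultimately have "n * y i + (\<Sum>j<H i. y j) \<ge> lm * (n * w + (1 - w) * (n - 1) - 1)"
      proof -
        assume a1: "real k * Yf hh \<ge> (1 - w) * (n - 1)" and a2: "n * y i \<ge> n * (lm * w)"
        have "lm * (real k * Yf hh - 1) \<ge> lm * ((1 - w) * (n - 1) - 1)"
          using a1 d unfolding lm_def by (intro mult_left_mono) auto
        moreover have "lm * (n * w + (1 - w) * (n - 1) - 1) = n * (lm * w) + lm * ((1 - w) * (n - 1) - 1)"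
          by (simp add: algebra_simps)
        ultimately show ?thesis using S a2 by linarith
      qed
      moreover have "lm * (n * w + (1 - w) * (n - 1) - 1) \<ge> n"
      proof -
        have e: "n * w + (1 - w) * (n - 1) - 1 = n - 2 + w" by (simp add: algebra_simps)
        have "lm * (n - 2 + w) \<ge> lm * (n - 2)" using w basic d unfolding lm_def by simp
        moreover have "lm * (n - 2) \<ge> n" using nbig unfolding lm_def by (simp add: algebra_simps)
        ultimately show ?thesis unfolding e by linarith
      qed
      ultimately show ?thesis unfolding n_def by linarith
    qed
  qed
  have sumk: "(\<Sum>j<k. y j) \<le> (2 - sqrt 2 + \<epsilon>) * k"
  proof -
    have "(\<Sum>j<k. y j) \<le> (\<Sum>j<k. lm * k * D j + (if K0 \<le> j then 1 else 0))"
      using D0 lkD d unfolding y_def lm_def by (intro sum_mono) auto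
    also have "\<dots> = lm * k * Yf 1 + (\<Sum>j<k. (if K0 \<le> j then 1 else 0))"
      using sumY unfolding sum.distrib D_def sum_distrib_left[symmetric]
      using sum_lessThan_telescope[of "\<lambda>j. Yf (real j / k)" k] Yf_0 kr by simp
    also have "(\<Sum>j<k. (if K0 \<le> j then 1 else 0::real)) = real (k - K0)"
    proof -
      have "{x. x < k} \<inter> Collect ((\<le>) K0) = {K0..<k}" by auto
      then show ?thesis by (simp add: sum.If_cases lessThan_def)
    qed
    finally have s1: "(\<Sum>j<k. y j) \<le> lm * k * (2 - sqrt 2) + real (k - K0)" using Yf_1 by simp
    have "real (k - K0) \<le> real k * \<delta> + 1" using K0r K0k by (simp add: of_nat_diff algebra_simps)
    moreover have "lm * k * (2 - sqrt 2) \<le> real k * (2 - sqrt 2) + real k * \<delta>"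
    proof -
      have "2 - sqrt 2 \<le> 1" "0 \<le> 2 - sqrt 2" using s0_bounds unfolding s0_def by auto
      then have "\<delta> * (2 - sqrt 2) \<le> \<delta>" using d by (simp add: mult_left_le)
      then have "real k * (\<delta> * (2 - sqrt 2)) \<le> real k * \<delta>" using kr by simp
      then show ?thesis unfolding lm_def by (simp add: algebra_simps)
    qed
    moreover have "1 \<le> real k * (\<epsilon>/4)" using ke kr by (simp add: divide_simps mult.commute)
    moreover have "real k * \<delta> \<le> real k * (\<epsilon>/4)" using d kr by simp
    ultimately have "(\<Sum>j<k. y j) \<le> real k * (2 - sqrt 2) + real k * (3*\<epsilon>/4)"
      using s1 by (simp add: algebra_simps)
    also have "\<dots> \<le> (2 - sqrt 2 + \<epsilon>) * k" using assms kr by (simp add: algebra_simps)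
    finally show ?thesis .
  qed
  show ?thesis
    by (rule exI[of _ k], rule exI[of _ H], rule exI[of _ y]) (use kpos Hmono Hk yb dual sumk in auto)
qed




lemma level_step:
  assumes fE: "finite E" and fN: "finite N" and uN: "u \<notin> N" and NE: "\<forall>v\<in>N. {u, v} \<in> E"
  shows "level E (\<lambda>e. x e + (\<Sum>v\<in>N. if e = {u, v} then \<delta> v else 0)) w =
         level E x w + (if w = u then (\<Sum>v\<in>N. \<delta> v) else if w \<in> N then \<delta> w else 0)"
proof -
  let ?Ew = "{e\<in>E. w \<in> e}"
  have fEw: "finite ?Ew" using fE by simp
  have "level E (\<lambda>e. x e + (\<Sum>v\<in>N. if e = {u, v} then \<delta> v else 0)) w =
        level E x w + (\<Sum>e\<in>?Ew. \<Sum>v\<in>N. if e = {u, v} then \<delta> v else 0)"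
    unfolding level_def by (simp add: sum.distrib)
  also have "(\<Sum>e\<in>?Ew. \<Sum>v\<in>N. if e = {u, v} then \<delta> v else 0) =
      (\<Sum>v\<in>N. \<Sum>e\<in>?Ew. if e = {u, v} then \<delta> v else 0)"
    by (rule sum.swap)
  also have "\<dots> = (\<Sum>v\<in>N. if w \<in> {u, v} then \<delta> v else 0)"
  proof (rule sum.cong[OF refl])
    fix v assume "v \<in> N"
    then have "{u,v} \<in> E" using NE by auto
    then show "(\<Sum>e\<in>?Ew. if e = {u, v} then \<delta> v else 0) = (if w \<in> {u, v} then \<delta> v else 0)"
      using fEw by (simp add: sum.delta[OF fEw])
  qed
  also have "\<dots> = (if w = u then (\<Sum>v\<in>N. \<delta> v) else if w \<in> N then \<delta> w else 0)"
  proof (cases "w = u")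
    case True then show ?thesis by simp
  next
    case False
    then have "(\<Sum>v\<in>N. if w \<in> {u, v} then \<delta> v else 0) = (\<Sum>v\<in>N. if w = v then \<delta> v else 0)"
      by (intro sum.cong) auto
    also have "\<dots> = (if w \<in> N then \<delta> w else 0)" using fN by (simp add: sum.delta)
    finally show ?thesis using False by simp
  qed
  finally show ?thesis .
qed

lemma tot_step:
  assumes fE: "finite E" and NE: "\<forall>v\<in>N. {u, v} \<in> E"
  shows "(\<Sum>e\<in>E. x e + (\<Sum>v\<in>N. if e = {u, v} then \<delta> v else 0)) = (\<Sum>e\<in>E. x e) + (\<Sum>v\<in>N. \<delta> v)"
proof -
  have "(\<Sum>e\<in>E. \<Sum>v\<in>N. if e = {u, v} then \<delta> v else 0) = (\<Sum>v\<in>N. \<Sum>e\<in>E. if e = {u, v} then \<delta> v else 0)"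
    by (rule sum.swap)
  also have "\<dots> = (\<Sum>v\<in>N. \<delta> v)"
    using NE fE by (intro sum.cong) (auto simp: sum.delta)
  finally show ?thesis by (simp add: sum.distrib)
qed

lemma step_equal:
  assumes st: "wf_step E N u x x'" and fN: "finite N" and lv: "\<forall>v\<in>N. level E x v = \<sigma>" and s1: "\<sigma> \<le> 1"
  shows "\<exists>d\<ge>0. x' = (\<lambda>e. x e + (\<Sum>v\<in>N. if e = {u, v} then d else 0)) \<and>
           level E x u + real (card N) * d \<le> 1 \<and> \<sigma> + d \<le> 1"
proof -
  obtain L where L: "L \<le> 1" "level E x u + (\<Sum>v\<in>N. max 0 (L - level E x v)) \<le> 1"
    "x' = (\<lambda>e. x e + (\<Sum>v\<in>N. if e = {u, v} then max 0 (L - level E x v) else 0))"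
    using st unfolding wf_step_def by blast
  define d where "d = max 0 (L - \<sigma>)"
  have "(\<Sum>v\<in>N. max 0 (L - level E x v)) = real (card N) * d"
    using lv unfolding d_def by simp
  moreover have "x' = (\<lambda>e. x e + (\<Sum>v\<in>N. if e = {u, v} then d else 0))"
    unfolding L(3) d_def using lv by (intro ext) (auto intro!: sum.cong)
  moreover have "\<sigma> + d \<le> 1" using L(1) s1 unfolding d_def by simp
  moreover have "d \<ge> 0" unfolding d_def by simp
  ultimately show ?thesis using L(2) by (intro exI[of _ d]) auto
qed

lemma step_exists:
  assumes fN: "finite N" and ne: "N \<noteq> {}" and lv: "\<forall>v\<in>N. level E x v = \<sigma>" and s1: "\<sigma> \<le> 1"
    and u1: "level E x u \<le> 1"
  shows "\<exists>x'. wf_step E N u x x'"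
proof -
  define p where "p = level E x u"
  define n where "n = real (card N)"
  have n0: "n > 0" using fN ne unfolding n_def by (simp add: card_gt_0_iff)
  define L where "L = min 1 (\<sigma> + (1 - p) / n)"
  have Ls: "L \<ge> \<sigma>" unfolding L_def using s1 u1 n0 p_def by auto
  have sm: "(\<Sum>v\<in>N. max 0 (L - level E x v)) = n * (L - \<sigma>)"
    using lv Ls unfolding n_def by simp
  have a: "p + n * (L - \<sigma>) \<le> 1"
  proof -
    have "n * (L - \<sigma>) \<le> n * ((1 - p) / n)" using n0 unfolding L_def by (intro mult_left_mono) auto
    then show ?thesis using n0 by simp
  qed
  have b: "p + n * (L - \<sigma>) = 1 \<or> L = 1"
  proof (cases "\<sigma> + (1 - p) / n \<le> 1")
    case True
    then have "L = \<sigma> + (1 - p) / n" unfolding L_def by simp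
    then show ?thesis using n0 by simp
  next
    case False then show ?thesis unfolding L_def by simp
  qed
  show ?thesis unfolding wf_step_def
    by (rule exI, rule exI[of _ L]) (use a b sm p_def L_def in auto)
qed

lemma step_empty: "wf_step E {} u x x' \<longleftrightarrow> x' = x \<and> level E x u \<le> 1"
  unfolding wf_step_def by (auto intro!: exI[of _ 1])

lemma run_nil: "wf_run E [] x x' \<longleftrightarrow> x' = x"
  by (auto elim: wf_run.cases intro: wf_run.intros)

lemma run_Arr: "wf_run E (Arrival v # es) x x' \<longleftrightarrow> wf_run E es x x'"
  by (auto elim: wf_run.cases intro: wf_run.intros)

lemma run_Dl: "wf_run E (Deadline u # es) x x'' \<longleftrightarrow>
   (\<exists>x'. wf_step E {v. {u, v} \<in> E \<and> Deadline v \<in> set es} u x x' \<and> wf_run E es x' x'')"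
  by (auto elim: wf_run.cases intro: wf_run.intros)

lemma run_arrivals: "wf_run E (map Arrival l @ es) x x' \<longleftrightarrow> wf_run E es x x'"
  by (induction l) (auto simp: run_Arr)




lemma two_ne[simp]: "(2*a::nat) \<noteq> Suc (2*b)" "Suc (2*b) \<noteq> (2*a::nat)" by presburger+

lemma before_app: assumes "a \<in> set xs" "b \<in> set ys" shows "before (xs @ ys) a b"
proof -
  obtain i where i: "i < length xs" "xs ! i = a" using assms(1) by (auto simp: in_set_conv_nth)
  obtain j where j: "j < length ys" "ys ! j = b" using assms(2) by (auto simp: in_set_conv_nth)
  show ?thesis unfolding before_def
    by (rule exI[of _ i], rule exI[of _ "length xs + j"]) (use i j in \<open>auto simp: nth_append\<close>)
qed

lemma card_one: assumes "a \<noteq> b" "(a \<in> A) \<noteq> (b \<in> A)" shows "card ({a, b} \<inter> A) = 1"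
proof (cases "a \<in> A")
  case True
  then have "{a, b} \<inter> A = {a}" using assms by auto
  then show ?thesis by simp
next
  case False
  then have "{a, b} \<inter> A = {b}" using assms by auto
  then show ?thesis by simp
qed

locale inst =
  fixes k m :: nat and H :: "nat \<Rightarrow> nat" and y :: "nat \<Rightarrow> real"
  assumes kpos: "k > 0" and mpos: "m > 0"
    and Hmono: "\<forall>i j. i \<le> j \<longrightarrow> j < k \<longrightarrow> H j \<le> H i"
    and Hk: "\<forall>i<k. H i \<le> k"
    and yb: "\<forall>i<k. 0 \<le> y i \<and> y i \<le> 1"
    and dual: "\<forall>i<k. real (k - i + H i) * y i + (\<Sum>j<H i. y j) \<ge> real (k - i + H i)"
begin

definition E :: "nat set set" where
  "E = {{2*r, 2*s+1} | r s. s < m*k \<and> r \<le> s \<and> s div k = r div k} \<union>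
       {{2*r, 2*s} | r s. s < m*k \<and> s div k = Suc (r div k) \<and> s mod k < H (r mod k)}"

definition N :: "nat \<Rightarrow> nat set" where
  "N r = {2*s+1 | s. r \<le> s \<and> s < m*k \<and> s div k = r div k} \<union>
         {2*s | s. s < m*k \<and> s div k = Suc (r div k) \<and> s mod k < H (r mod k)}"

definition rest :: "nat \<Rightarrow> nat event list" where
  "rest r = map (\<lambda>s. Deadline (2*s)) [r..<m*k] @ map (\<lambda>s. Deadline (2*s+1)) [0..<m*k]"

lemma E_sub: "E \<subseteq> (\<lambda>(a,b). {a,b}) ` ({..<2*m*k} \<times> {..<2*m*k})"
proof
  fix e assume "e \<in> E"
  then consider (a) r s where "e = {2*r, 2*s+1}" "s < m*k" "r \<le> s"
    | (b) r s where "e = {2*r, 2*s}" "s < m*k" "s div k = Suc (r div k)"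
    unfolding E_def by blast
  then show "e \<in> (\<lambda>(a,b). {a,b}) ` ({..<2*m*k} \<times> {..<2*m*k})"
  proof cases
    case a then show ?thesis by (intro image_eqI[of _ _ "(2*r, 2*s+1)"]) auto
  next
    case b
    then have "r < s" using kpos by (metis Suc_n_not_le_n div_le_mono linorder_not_less)
    then show ?thesis using b by (intro image_eqI[of _ _ "(2*r, 2*s)"]) auto
  qed
qed

lemma finE: "finite E" using E_sub by (rule finite_subset) auto

lemma set_rest: "Deadline v \<in> set (rest r) \<longleftrightarrow> (\<exists>s. v = 2*s \<and> r \<le> s \<and> s < m*k) \<or> (\<exists>s. v = 2*s+1 \<and> s < m*k)"
  unfolding rest_def by auto

lemma rest_Cons: "r < m*k \<Longrightarrow> rest r = Deadline (2*r) # rest (Suc r)"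
  unfolding rest_def by (simp add: upt_conv_Cons)

lemma N_char: assumes "r < m*k"
  shows "{v. {2*r, v} \<in> E \<and> Deadline v \<in> set (rest (Suc r))} = N r"
proof (intro set_eqI iffI)
  fix v assume "v \<in> {v. {2*r, v} \<in> E \<and> Deadline v \<in> set (rest (Suc r))}"
  then have e: "{2*r, v} \<in> E" and d: "Deadline v \<in> set (rest (Suc r))" by auto
  from e consider (a) r' s where "{2*r, v} = {2*r', 2*s+1}" "s < m*k" "r' \<le> s" "s div k = r' div k"
    | (b) r' s where "{2*r, v} = {2*r', 2*s}" "s < m*k" "s div k = Suc (r' div k)" "s mod k < H (r' mod k)"
    unfolding E_def by blast
  then show "v \<in> N r"
  proof cases
    case a
    from a(1) have "r = r' \<and> v = 2*s+1" by (auto simp: doubleton_eq_iff)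
    then show ?thesis using a unfolding N_def by auto
  next
    case b
    then have "(r = r' \<and> v = 2*s) \<or> (r = s \<and> v = 2*r')" by (auto simp: doubleton_eq_iff)
    then show ?thesis
    proof
      assume "r = r' \<and> v = 2*s" then show ?thesis using b unfolding N_def by auto
    next
      assume h: "r = s \<and> v = 2*r'"
      then have "r' < r" using b kpos by (metis Suc_n_not_le_n div_le_mono linorder_not_less)
      moreover from d h obtain s' where "2*r' = 2*s' \<and> Suc r \<le> s'" unfolding set_rest by auto
      ultimately show ?thesis by simp
    qed
  qed
next
  fix v assume "v \<in> N r"
  then consider (a) s where "v = 2*s+1" "r \<le> s" "s < m*k" "s div k = r div k"
    | (b) s where "v = 2*s" "s < m*k" "s div k = Suc (r div k)" "s mod k < H (r mod k)"
    unfolding N_def by blast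
  then show "v \<in> {v. {2*r, v} \<in> E \<and> Deadline v \<in> set (rest (Suc r))}"
  proof cases
    case a
    then show ?thesis unfolding E_def set_rest by auto
  next
    case b
    then have "r < s" using kpos by (metis Suc_n_not_le_n div_le_mono linorder_not_less)
    then show ?thesis using b unfolding E_def set_rest by auto
  qed
qed


lemma divchar: "s div k = q \<longleftrightarrow> q*k \<le> s \<and> s < Suc q * k"
proof -
  have "s div k = q \<longleftrightarrow> \<not> s div k < q \<and> s div k < Suc q" by arith
  then show ?thesis using div_less_iff_less_mult[OF kpos] by (simp add: not_less)
qed

lemma dm: "j < k \<Longrightarrow> (a*k + j) div k = a" "j < k \<Longrightarrow> (a*k + j) mod k = j"
  by simp_all

definition A :: "nat \<Rightarrow> nat set" where "A r = {s. r \<le> s \<and> s < m*k \<and> s div k = r div k}"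
definition R :: "nat \<Rightarrow> nat set" where "R r = {s. s < m*k \<and> s div k = Suc (r div k) \<and> s mod k < H (r mod k)}"

lemma N_AR: "N r = (\<lambda>s. 2*s+1) ` A r \<union> (\<lambda>s. 2*s) ` R r"
  unfolding N_def A_def R_def by auto

lemma A_eq: assumes "r < m*k" shows "A r = {r..<r div k * k + k}"
proof -
  define t where "t = r div k"
  have "t < m" using assms kpos unfolding t_def by (simp add: div_less_iff_less_mult)
  then have "Suc t * k \<le> m * k" by (intro mult_le_mono1) simp
  then have tm: "t * k + k \<le> m * k" by simp
  have tr: "t * k \<le> r" unfolding t_def by (simp add: div_times_less_eq_dividend)
  show ?thesis
  proof (intro set_eqI)
    fix s
    have "s \<in> A r \<longleftrightarrow> r \<le> s \<and> s < m*k \<and> (t*k \<le> s \<and> s < Suc t * k)"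
      unfolding A_def t_def[symmetric] using divchar[of s t] by simp
    also have "\<dots> \<longleftrightarrow> s \<in> {r..<t * k + k}" using tm tr by auto
    finally show "s \<in> A r \<longleftrightarrow> s \<in> {r..<r div k * k + k}" unfolding t_def .
  qed
qed

lemma card_A: assumes "r < m*k" shows "card (A r) = k - r mod k"
proof -
  have "r div k * k + r mod k = r" by simp
  then have "r div k * k + k - r = k - r mod k" by linarith
  then show ?thesis using A_eq[OF assms] by simp
qed

lemma R_eq: assumes "Suc (Suc (r div k)) \<le> m" shows "R r = (\<lambda>j. Suc (r div k) * k + j) ` {..<H (r mod k)}"
proof -
  have Hi: "H (r mod k) \<le> k" using Hk kpos by simp
  show ?thesis
  proof (intro set_eqI iffI)
    fix s assume "s \<in> R r"
    then have s: "s div k = Suc (r div k)" "s mod k < H (r mod k)" unfolding R_def by auto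
    have "s = Suc (r div k) * k + s mod k" using s(1) by (metis div_mult_mod_eq)
    then show "s \<in> (\<lambda>j. Suc (r div k) * k + j) ` {..<H (r mod k)}" using s(2) by auto
  next
    fix s assume "s \<in> (\<lambda>j. Suc (r div k) * k + j) ` {..<H (r mod k)}"
    then obtain j where j: "j < H (r mod k)" "s = Suc (r div k) * k + j" by auto
    have jk: "j < k" using j Hi by simp
    have "s < Suc (Suc (r div k)) * k" using j jk by simp
    also have "\<dots> \<le> m * k" using assms by (rule mult_le_mono1)
    moreover have "s div k = Suc (r div k)" "s mod k = j" using dm[OF jk, of "Suc (r div k)"] j(2) by simp_all
    ultimately show "s \<in> R r" unfolding R_def using j by auto
  qed
qed

lemma R_last: assumes "Suc (r div k) = m" shows "R r = {}"
proof -
  { fix s assume "s \<in> R r"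
    then have "s < m*k" "s div k = m" using assms unfolding R_def by auto
    then have False using div_less_iff_less_mult[OF kpos, of s m] by simp }
  then show ?thesis by auto
qed

lemma finN: "finite (N r)" unfolding N_AR A_def R_def by auto

lemma rN: "2*r \<notin> N r" unfolding N_def by auto

lemma card_N: assumes "r < m*k" shows "card (N r) = card (A r) + card (R r)"
proof -
  have "card (N r) = card ((\<lambda>s. 2*s+1) ` A r) + card ((\<lambda>s. 2*s) ` R r)"
    unfolding N_AR by (rule card_Un_disjoint) (auto simp: A_def R_def)
  moreover have "card ((\<lambda>s. 2*s+1) ` A r) = card (A r)" by (rule card_image) (auto simp: inj_on_def)
  moreover have "card ((\<lambda>s. 2*s) ` R r) = card (R r)" by (rule card_image) (auto simp: inj_on_def)
  ultimately show ?thesis by simp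
qed


definition om :: "nat \<Rightarrow> real" where "om s = (if Suc (s div k) = m then 1 else y (s mod k))"

lemma om_nn: "0 \<le> om s" and om_le1: "om s \<le> 1"
  using yb kpos unfolding om_def by auto

lemma rA: "r < m*k \<Longrightarrow> r \<in> A r" unfolding A_def by simp

lemma Nne: "r < m*k \<Longrightarrow> 2*r+1 \<in> N r" unfolding N_AR using rA by auto

lemma rR: "r \<notin> R r" unfolding R_def by auto

lemma gain_key: assumes "r < m*k"
  shows "om r * real (card (N r)) + (\<Sum>s\<in>R r. om s) \<ge> real (card (N r))"
proof (cases "Suc (r div k) = m")
  case True
  then have "om r = 1" unfolding om_def by simp
  moreover have "(\<Sum>s\<in>R r. om s) \<ge> 0" using om_nn by (intro sum_nonneg) auto
  ultimately show ?thesis by simp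
next
  case False
  define t where "t = r div k"
  define i where "i = r mod k"
  have ik: "i < k" unfolding i_def using kpos by simp
  have "t < m" using assms kpos unfolding t_def by (simp add: div_less_iff_less_mult)
  then have tm: "Suc (Suc t) \<le> m" using False t_def by simp
  have omr: "om r = y i" unfolding om_def i_def using False by simp
  have Req: "R r = (\<lambda>j. Suc t * k + j) ` {..<H i}" using R_eq tm unfolding t_def i_def by simp
  have cR: "card (R r) = H i" unfolding Req by (subst card_image) (auto simp: inj_on_def)
  have cN: "card (N r) = k - i + H i" using card_N[OF assms] card_A[OF assms] cR i_def by simp
  have Hi: "H i \<le> k" using Hk ik by simp
  have "(\<Sum>s\<in>R r. om s) = (\<Sum>j<H i. om (Suc t * k + j))"
    unfolding Req by (subst sum.reindex) (auto simp: inj_on_def)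
  also have "\<dots> \<ge> (\<Sum>j<H i. y j)"
  proof (intro sum_mono)
    fix j assume "j \<in> {..<H i}"
    then have jk: "j < k" using Hi by simp
    then have "(Suc t * k + j) div k = Suc t" "(Suc t * k + j) mod k = j" using dm by blast+
    then show "y j \<le> om (Suc t * k + j)" unfolding om_def using yb jk by auto
  qed
  finally have "(\<Sum>s\<in>R r. om s) \<ge> (\<Sum>j<H i. y j)" .
  moreover have "real (k - i + H i) * y i + (\<Sum>j<H i. y j) \<ge> real (k - i + H i)" using dual ik by blast
  ultimately show ?thesis unfolding cN omr by (simp add: mult.commute)
qed

lemma psi_sum: assumes "r < m*k"
  shows "(\<Sum>s<m*k. om s * (if 2*s = 2*r then c else if 2*s \<in> N r then d else 0))
         = om r * c + d * (\<Sum>s\<in>R r. om s)"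
proof -
  have e: "2*s \<in> N r \<longleftrightarrow> s \<in> R r" for s unfolding N_AR by auto
  have RS: "R r \<subseteq> {..<m*k}" unfolding R_def by auto
  have "(\<Sum>s<m*k. om s * (if 2*s = 2*r then c else if 2*s \<in> N r then d else 0))
      = (\<Sum>s<m*k. (if s = r then om s * c else 0) + (if s \<in> R r then om s * d else 0))"
    using rR[of r] by (intro sum.cong) (auto simp: e)
  also have "\<dots> = om r * c + (\<Sum>s\<in>R r. om s * d)"
    using assms RS by (simp add: sum.distrib sum.If_cases Int_absorb1)
  also have "(\<Sum>s\<in>R r. om s * d) = d * (\<Sum>s\<in>R r. om s)" by (simp add: sum_distrib_left mult.commute)
  finally show ?thesis .
qed

definition Psi :: "(nat set \<Rightarrow> real) \<Rightarrow> real" where "Psi x = (\<Sum>s<m*k. om s * level E x (2*s))"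
definition tot :: "(nat set \<Rightarrow> real) \<Rightarrow> real" where "tot x = (\<Sum>e\<in>E. x e)"

definition Inv :: "nat \<Rightarrow> (nat set \<Rightarrow> real) \<Rightarrow> bool" where
  "Inv r x \<longleftrightarrow> (\<forall>w. level E x w \<le> 1) \<and> (r < m*k \<longrightarrow> (\<exists>\<sigma>. \<forall>w\<in>N r. level E x w = \<sigma>)) \<and>
     (\<forall>s. (r div k < s div k \<longrightarrow> level E x (2*s+1) = 0) \<and> (Suc (r div k) < s div k \<longrightarrow> level E x (2*s) = 0)) \<and>
     tot x \<le> Psi x"

lemma NE: "r < m*k \<Longrightarrow> \<forall>v\<in>N r. {2*r, v} \<in> E" using N_char by blast


lemma inv_step:
  assumes r: "r < m*k" and I: "Inv r x" and st: "wf_step E (N r) (2*r) x x'"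
  shows "Inv (Suc r) x'"
proof -
  from I obtain \<sigma> where sg: "\<forall>w\<in>N r. level E x w = \<sigma>" unfolding Inv_def using r by blast
  have l1: "\<forall>w. level E x w \<le> 1" using I unfolding Inv_def by blast
  have zer: "\<And>s. (r div k < s div k \<longrightarrow> level E x (2*s+1) = 0) \<and> (Suc (r div k) < s div k \<longrightarrow> level E x (2*s) = 0)"
    using I unfolding Inv_def by blast
  have tp: "tot x \<le> Psi x" using I unfolding Inv_def by blast
  have s1: "\<sigma> \<le> 1" using sg l1 Nne[OF r] by metis
  obtain d where d: "d \<ge> 0" "x' = (\<lambda>e. x e + (\<Sum>v\<in>N r. if e = {2*r, v} then d else 0))"
    "level E x (2*r) + real (card (N r)) * d \<le> 1" "\<sigma> + d \<le> 1"
    using step_equal[OF st finN sg s1] by blast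
  define cN where "cN = real (card (N r))"
  have lev: "level E x' w = level E x w + (if w = 2*r then cN * d else if w \<in> N r then d else 0)" for w
    unfolding d(2) cN_def using level_step[OF finE finN rN NE[OF r], of x "\<lambda>_. d" w] by simp
  have tt: "tot x' = tot x + cN * d"
    unfolding d(2) cN_def tot_def using tot_step[OF finE NE[OF r], of x "\<lambda>_. d"] by simp
  have A1: "\<forall>w. level E x' w \<le> 1"
  proof
    fix w show "level E x' w \<le> 1" unfolding lev using d(3) d(4) sg l1 cN_def by auto
  qed
  have A3: "\<forall>s. (Suc r div k < s div k \<longrightarrow> level E x' (2*s+1) = 0) \<and> (Suc (Suc r div k) < s div k \<longrightarrow> level E x' (2*s) = 0)"
  proof (intro allI conjI impI)
    fix s
    have mono: "r div k \<le> Suc r div k" by (simp add: div_le_mono)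
    { assume a: "Suc r div k < s div k"
      then have ne: "s div k \<noteq> r div k" using mono by linarith
      have "2*s+1 \<notin> N r"
      proof
        assume "2*s+1 \<in> N r"
        then obtain s' where "2*s+1 = 2*s'+1" "s' div k = r div k" unfolding N_def by auto
        then show False using ne by simp
      qed
      moreover have "2*s+1 \<noteq> 2*r" by simp
      ultimately show "level E x' (2*s+1) = 0" unfolding lev using zer[of s] a mono by auto }
    { assume a: "Suc (Suc r div k) < s div k"
      then have ne: "s div k \<noteq> Suc (r div k)" using mono by linarith
      have "2*s \<notin> N r"
      proof
        assume "2*s \<in> N r"
        then obtain s' where "2*s = 2*s'" "s' div k = Suc (r div k)" unfolding N_def by auto
        then show False using ne by simp
      qed
      moreover have "s \<noteq> r" using a mono by (metis Suc_lessD less_not_refl2 order_le_less_trans)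
      ultimately show "level E x' (2*s) = 0" unfolding lev using zer[of s] a mono by auto }
  qed
  have A2: "Suc r < m*k \<longrightarrow> (\<exists>\<sigma>. \<forall>w\<in>N (Suc r). level E x' w = \<sigma>)"
  proof
    assume sr: "Suc r < m*k"
    show "\<exists>\<sigma>. \<forall>w\<in>N (Suc r). level E x' w = \<sigma>"
    proof (cases "Suc r mod k = 0")
      case False
      then have dv: "Suc r div k = r div k" and md: "Suc r mod k = Suc (r mod k)"
        by (metis div_Suc mod_Suc)+
      have "Suc (r mod k) < k" using md kpos by (metis mod_less_divisor)
      then have HH: "H (Suc r mod k) \<le> H (r mod k)" using Hmono md by auto
      have sub: "N (Suc r) \<subseteq> N r" unfolding N_def dv using HH by auto
      have "\<forall>w\<in>N (Suc r). level E x' w = \<sigma> + d"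
      proof
        fix w assume "w \<in> N (Suc r)"
        then have "w \<in> N r" "w \<noteq> 2*r" using sub rN by auto
        then show "level E x' w = \<sigma> + d" unfolding lev using sg by auto
      qed
      then show ?thesis by blast
    next
      case True
      then have dv: "Suc r div k = Suc (r div k)"
        by (metis div_Suc kpos mod_Suc mod_less_divisor)
      have "\<forall>w\<in>N (Suc r). level E x' w = 0"
      proof
        fix w assume "w \<in> N (Suc r)"
        then consider (a) s where "w = 2*s+1" "s div k = Suc r div k"
          | (b) s where "w = 2*s" "s div k = Suc (Suc r div k)" unfolding N_def by blast
        then show "level E x' w = 0"
        proof cases
          case a
          then have "w \<notin> N r" "w \<noteq> 2*r" unfolding N_def using dv by auto
          then show ?thesis unfolding lev using zer[of s] a dv by auto
        next
          case b
          then have "w \<notin> N r" "w \<noteq> 2*r" unfolding N_def using dv by auto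
          then show ?thesis unfolding lev using zer[of s] b dv by auto
        qed
      qed
      then show ?thesis by blast
    qed
  qed
  have A4: "tot x' \<le> Psi x'"
  proof -
    have "Psi x' = Psi x + (\<Sum>s<m*k. om s * (if 2*s = 2*r then cN * d else if 2*s \<in> N r then d else 0))"
      unfolding Psi_def lev by (simp add: algebra_simps sum.distrib)
    also have "(\<Sum>s<m*k. om s * (if 2*s = 2*r then cN * d else if 2*s \<in> N r then d else 0)) =
        om r * (cN * d) + d * (\<Sum>s\<in>R r. om s)" using psi_sum[OF r] .
    also have "om r * (cN * d) + d * (\<Sum>s\<in>R r. om s) = d * (om r * cN + (\<Sum>s\<in>R r. om s))"
      by (simp add: algebra_simps)
    finally have eq: "Psi x' = Psi x + d * (om r * cN + (\<Sum>s\<in>R r. om s))" .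
    have "d * (om r * cN + (\<Sum>s\<in>R r. om s)) \<ge> d * cN"
      using gain_key[OF r] d(1) unfolding cN_def by (intro mult_left_mono) auto
    then show ?thesis using tt tp eq by (simp add: mult.commute)
  qed
  show ?thesis unfolding Inv_def using A1 A2 A3 A4 by blast
qed


lemma no_odd_edge: "{2*a+1, 2*b+1} \<notin> E"
proof
  assume "{2*a+1, 2*b+1} \<in> E"
  then obtain r where "2*r \<in> {2*a+1, 2*b+1}" unfolding E_def by blast
  then show False by auto
qed

lemma vphase:
  assumes "\<forall>w. level E x w \<le> 1"
  shows "wf_run E (map (\<lambda>s. Deadline (2*s+1)) l) x xf \<longleftrightarrow> xf = x"
  using assms
proof (induction l arbitrary: x)
  case Nil then show ?case by (simp add: run_nil)
next
  case (Cons a l)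
  have Ne: "{v. {2*a+1, v} \<in> E \<and> Deadline v \<in> set (map (\<lambda>s. Deadline (2*s+1)) l)} = {}"
    using no_odd_edge by auto
  show ?case unfolding list.map(2) run_Dl Ne step_empty using Cons by auto
qed

lemma Psi_bound: "\<forall>w. level E x w \<le> 1 \<Longrightarrow> Psi x \<le> (\<Sum>s<m*k. om s)"
  unfolding Psi_def by (intro sum_mono) (simp add: om_nn mult_left_le)

lemma run_main:
  assumes "r \<le> m*k" "Inv r x"
  shows "(\<exists>xf. wf_run E (rest r) x xf) \<and> (\<forall>xf. wf_run E (rest r) x xf \<longrightarrow> tot xf \<le> (\<Sum>s<m*k. om s))"
  using assms
proof (induction "m*k - r" arbitrary: r x)
  case 0
  then have rr: "r = m*k" by simp
  have l1: "\<forall>w. level E x w \<le> 1" using 0 unfolding Inv_def by blast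
  have "rest r = map (\<lambda>s. Deadline (2*s+1)) [0..<m*k]" unfolding rest_def rr by simp
  then show ?case using vphase[OF l1] Psi_bound[OF l1] 0 unfolding Inv_def by auto
next
  case (Suc n)
  then have r: "r < m*k" by simp
  have rc: "rest r = Deadline (2*r) # rest (Suc r)" using rest_Cons[OF r] .
  have Nc: "{v. {2*r, v} \<in> E \<and> Deadline v \<in> set (rest (Suc r))} = N r" using N_char[OF r] .
  have IH: "\<And>x'. Inv (Suc r) x' \<Longrightarrow> (\<exists>xf. wf_run E (rest (Suc r)) x' xf) \<and>
      (\<forall>xf. wf_run E (rest (Suc r)) x' xf \<longrightarrow> tot xf \<le> (\<Sum>s<m*k. om s))"
    using Suc by (intro Suc.hyps(1)) auto
  have I: "Inv r x" using Suc by blast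
  from I obtain \<sigma> where sg: "\<forall>w\<in>N r. level E x w = \<sigma>" unfolding Inv_def using r by blast
  have l1: "\<forall>w. level E x w \<le> 1" using I unfolding Inv_def by blast
  have s1: "\<sigma> \<le> 1" using sg l1 Nne[OF r] by metis
  obtain x' where x': "wf_step E (N r) (2*r) x x'"
    using step_exists[OF finN _ sg s1] Nne[OF r] l1 by blast
  have ex: "\<exists>xf. wf_run E (rest r) x xf"
    using IH[OF inv_step[OF r I x']] x' unfolding rc run_Dl Nc by blast
  have all: "\<forall>xf. wf_run E (rest r) x xf \<longrightarrow> tot xf \<le> (\<Sum>s<m*k. om s)"
    unfolding rc run_Dl Nc using IH inv_step[OF r I] by blast
  show ?case using ex all by blast
qed

lemma Inv0: "Inv 0 (\<lambda>_. 0)"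
proof -
  have z: "level E (\<lambda>_. 0) w = 0" for w unfolding level_def by simp
  show ?thesis unfolding Inv_def Psi_def tot_def z by simp
qed

lemma om_sum: "(\<Sum>s<m*k. om s) \<le> real m * (\<Sum>j<k. y j) + real k"
proof -
  have mk: "(\<Sum>s<n*k. f (s mod k)) = real n * (\<Sum>j<k. f j)" for n and f :: "nat \<Rightarrow> real"
  proof (induction n)
    case 0 then show ?case by simp
  next
    case (Suc n)
    have "{..<Suc n * k} = {..<n*k} \<union> {n*k..<n*k+k}" by auto
    then have "(\<Sum>s<Suc n*k. f (s mod k)) = (\<Sum>s\<in>{..<n*k} \<union> {n*k..<n*k+k}. f (s mod k))" by simp
    also have "\<dots> = (\<Sum>s<n*k. f (s mod k)) + (\<Sum>s\<in>{n*k..<n*k+k}. f (s mod k))"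
      by (rule sum.union_disjoint) auto
    also have "(\<Sum>s\<in>{n*k..<n*k+k}. f (s mod k)) = (\<Sum>j<k. f j)"
    proof -
      have ee: "{n*k..<n*k+k} = {0+n*k..<k+n*k}" by (simp add: add.commute)
      have "(\<Sum>s\<in>{n*k..<n*k+k}. f (s mod k)) = (\<Sum>j\<in>{0..<k}. f ((j + n*k) mod k))"
        unfolding ee sum.shift_bounds_nat_ivl by simp
      also have "\<dots> = (\<Sum>j<k. f j)" by (simp add: atLeast0LessThan)
      finally show ?thesis .
    qed
    finally show ?case using Suc by (simp add: algebra_simps)
  qed
  have "(\<Sum>s<m*k. om s) \<le> (\<Sum>s<m*k. y (s mod k) + (if (m-1)*k \<le> s then 1 else 0))"
  proof (intro sum_mono)
    fix s assume s: "s \<in> {..<m*k}"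
    show "om s \<le> y (s mod k) + (if (m-1)*k \<le> s then 1 else 0)"
    proof (cases "Suc (s div k) = m")
      case True
      then have "(m-1) * k \<le> s" by (metis diff_Suc_1 div_times_less_eq_dividend)
      then show ?thesis unfolding om_def using True yb kpos by auto
    next
      case False then show ?thesis unfolding om_def using yb kpos by auto
    qed
  qed
  also have "\<dots> = real m * (\<Sum>j<k. y j) + (\<Sum>s<m*k. (if (m-1)*k \<le> s then 1 else 0))"
    by (simp add: sum.distrib mk)
  also have "(\<Sum>s<m*k. (if (m-1)*k \<le> s then 1 else 0::real)) = real k"
  proof -
    have "{s. s < m*k \<and> (m-1)*k \<le> s} = {(m-1)*k..<m*k}" by auto
    moreover have "m*k - (m-1)*k = k" using mpos by (simp add: diff_mult_distrib)
    ultimately show ?thesis by (simp add: sum.If_cases lessThan_def Int_def)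
  qed
  finally show ?thesis .
qed


definition V :: "nat set" where "V = {..<2*m*k}"
definition evs :: "nat event list" where "evs = map Arrival [0..<2*m*k] @ rest 0"

lemma V_split: "w \<in> V \<longleftrightarrow> (\<exists>s<m*k. w = 2*s) \<or> (\<exists>s<m*k. w = 2*s+1)"
proof
  assume "w \<in> V"
  then have w: "w < 2*m*k" unfolding V_def by simp
  show "(\<exists>s<m*k. w = 2*s) \<or> (\<exists>s<m*k. w = 2*s+1)"
  proof (cases "even w")
    case True then show ?thesis using w by (intro disjI1 exI[of _ "w div 2"]) auto
  next
    case False then show ?thesis using w by (intro disjI2 exI[of _ "w div 2"]) auto
  qed
next
  assume "(\<exists>s<m*k. w = 2*s) \<or> (\<exists>s<m*k. w = 2*s+1)"
  then show "w \<in> V" unfolding V_def by auto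
qed

lemma E_pairs: "E \<subseteq> {{u, v} | u v. u \<in> V \<and> v \<in> V \<and> u \<noteq> v}"
proof
  fix e assume "e \<in> E"
  then consider (a) r s where "e = {2*r, 2*s+1}" "s < m*k" "r \<le> s"
    | (b) r s where "e = {2*r, 2*s}" "s < m*k" "s div k = Suc (r div k)"
    unfolding E_def by blast
  then show "e \<in> {{u, v} | u v. u \<in> V \<and> v \<in> V \<and> u \<noteq> v}"
  proof cases
    case a
    have "2*r < 2*m*k" "2*s+1 < 2*m*k" using a by auto
    then show ?thesis unfolding V_def a(1)
      by (intro CollectI exI[of _ "2*r"] exI[of _ "2*s+1"]) auto
  next
    case b
    then have "r < s" using kpos by (metis Suc_n_not_le_n div_le_mono linorder_not_less)
    then have "2*r < 2*m*k" "2*s < 2*m*k" "2*r \<noteq> 2*s" using b by auto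
    then show ?thesis unfolding V_def b(1)
      by (intro CollectI exI[of _ "2*r"] exI[of _ "2*s"]) auto
  qed
qed

lemma set_rest0: "set (rest 0) = Deadline ` V"
  unfolding rest_def using V_split by auto

lemma online: "online_instance V E evs"
proof -
  have d1: "distinct (rest 0)"
    unfolding rest_def by (auto simp: distinct_map inj_on_def)
  have ds: "distinct evs" unfolding evs_def using d1 by (auto simp: distinct_map inj_on_def set_rest0)
  have se: "set evs = Arrival ` V \<union> Deadline ` V" unfolding evs_def set_append set_rest0
    by (simp add: V_def atLeast0LessThan)
  have bf: "before evs (Arrival u) (Deadline v)" if "u \<in> V" "v \<in> V" for u v
    unfolding evs_def by (rule before_app) (use that in \<open>auto simp: set_rest0 V_def\<close>)
  have ed: "\<forall>u v. {u, v} \<in> E \<longrightarrow> before evs (Arrival u) (Deadline v)"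
  proof (intro allI impI)
    fix u v assume "{u, v} \<in> E"
    then obtain a b where "{u, v} = {a, b}" "a \<in> V" "b \<in> V" using E_pairs by blast
    then have "u \<in> V" "v \<in> V" by (auto simp: doubleton_eq_iff)
    then show "before evs (Arrival u) (Deadline v)" by (rule bf)
  qed
  show ?thesis unfolding online_instance_def using ds se bf ed E_pairs by (auto simp: V_def)
qed

lemma bip: "bipartite E"
  unfolding bipartite_def
proof (intro exI[of _ "{w. even (w + w div 2 div k)}"] ballI)
  fix e assume "e \<in> E"
  then consider (a) r s where "e = {2*r, 2*s+1}" "s div k = r div k"
    | (b) r s where "e = {2*r, 2*s}" "s div k = Suc (r div k)"
    unfolding E_def by blast
  then show "card (e \<inter> {w. even (w + w div 2 div k)}) = 1"
  proof cases
    case a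
    show ?thesis unfolding a(1) by (rule card_one) (use a(2) in auto)
  next
    case b
    then have "r \<noteq> s" by auto
    then show ?thesis unfolding b(1) by (intro card_one) (use b(2) in auto)
  qed
qed

lemma opt: "max_matching_size E \<ge> m*k"
proof -
  define M where "M = (\<lambda>s. {2*s, 2*s+1}) ` {..<m*k}"
  have ME: "M \<subseteq> E" unfolding M_def E_def by auto
  have mat: "matching E M"
    unfolding matching_def using ME unfolding M_def by auto
  have cM: "card M = m*k" unfolding M_def
    by (subst card_image) (auto simp: inj_on_def doubleton_eq_iff)
  have fin: "finite {M. matching E M}"
    by (rule finite_subset[of _ "Pow E"]) (auto simp: matching_def finE)
  have "card M \<le> Max (card ` {M. matching E M})"
    using fin mat by (intro Max_ge) auto
  then show ?thesis unfolding max_matching_size_def cM .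
qed

theorem inst_main:
  "online_instance V E evs \<and> bipartite E \<and> max_matching_size E \<ge> m*k \<and>
   (\<exists>x. wf_run E evs (\<lambda>_. 0) x) \<and>
   (\<forall>x. wf_run E evs (\<lambda>_. 0) x \<longrightarrow> (\<Sum>e\<in>E. x e) \<le> real m * (\<Sum>j<k. y j) + real k)"
proof -
  have r: "wf_run E evs x0 x \<longleftrightarrow> wf_run E (rest 0) x0 x" for x0 x
    unfolding evs_def by (rule run_arrivals)
  have main: "(\<exists>xf. wf_run E (rest 0) (\<lambda>_. 0) xf) \<and>
     (\<forall>xf. wf_run E (rest 0) (\<lambda>_. 0) xf \<longrightarrow> tot xf \<le> (\<Sum>s<m*k. om s))"
    using run_main[OF _ Inv0] by simp
  show ?thesis using online bip opt main om_sum unfolding r tot_def by force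
qed

end


theorem theorem3p5:
  fixes \<epsilon> :: real
  assumes "\<epsilon> > 0"
  shows "\<exists>(V::nat set) E evs.
           online_instance V E evs \<and> bipartite E \<and> max_matching_size E > 0 \<and>
           (\<exists>x. wf_run E evs (\<lambda>_. 0) x) \<and>
           (\<forall>x. wf_run E evs (\<lambda>_. 0) x \<longrightarrow>
                (\<Sum>e\<in>E. x e) \<le> (2 - sqrt 2 + \<epsilon>) * real (max_matching_size E))"
proof -
  have e2: "\<epsilon>/2 > 0" using assms by simp
  obtain k :: nat and H :: "nat \<Rightarrow> nat" and y :: "nat \<Rightarrow> real" where
    kp: "k > 0" and Hm: "\<forall>i j. i \<le> j \<longrightarrow> j < k \<longrightarrow> H j \<le> H i" and Hk: "\<forall>i<k. H i \<le> k"
    and yb: "\<forall>i<k. 0 \<le> y i \<and> y i \<le> 1"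
    and du: "\<forall>i<k. real (k - i + H i) * y i + (\<Sum>j<H i. y j) \<ge> real (k - i + H i)"
    and sy: "(\<Sum>j<k. y j) \<le> (2 - sqrt 2 + \<epsilon>/2) * k"
    using discrete[OF e2] by blast
  define m :: nat where "m = nat \<lceil>2/\<epsilon>\<rceil> + 1"
  have mp: "m > 0" unfolding m_def by simp
  have m2: "real m \<ge> 2/\<epsilon>" unfolding m_def by linarith
  have me: "real m * (\<epsilon>/2) \<ge> 1" using m2 assms by (simp add: divide_simps mult.commute)
  interpret I: inst k m H y
    using kp mp Hm Hk yb du by unfold_locales auto
  have M: "online_instance I.V I.E I.evs \<and> bipartite I.E \<and> max_matching_size I.E \<ge> m*k \<and>
     (\<exists>x. wf_run I.E I.evs (\<lambda>_. 0) x) \<and>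
     (\<forall>x. wf_run I.E I.evs (\<lambda>_. 0) x \<longrightarrow> (\<Sum>e\<in>I.E. x e) \<le> real m * (\<Sum>j<k. y j) + real k)"
    by (rule I.inst_main)
  have c0: "0 \<le> 2 - sqrt 2 + \<epsilon>"
  proof -
    have "sqrt 2 < 2" by (rule real_less_lsqrt) (auto simp: power2_eq_square)
    then show ?thesis using assms by simp
  qed
  have bound: "real m * (\<Sum>j<k. y j) + real k \<le> (2 - sqrt 2 + \<epsilon>) * real (max_matching_size I.E)"
  proof -
    have "real m * (\<Sum>j<k. y j) \<le> real m * ((2 - sqrt 2 + \<epsilon>/2) * k)"
      using sy by (intro mult_left_mono) auto
    moreover have "real k \<le> real k * (real m * (\<epsilon>/2))" using me kp by simp
    ultimately have "real m * (\<Sum>j<k. y j) + real k \<le> (2 - sqrt 2 + \<epsilon>) * (real m * real k)"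
      by (simp add: algebra_simps)
    also have "\<dots> \<le> (2 - sqrt 2 + \<epsilon>) * real (max_matching_size I.E)"
      using M c0 by (intro mult_left_mono) (auto simp flip: of_nat_mult)
    finally show ?thesis .
  qed
  have pos: "max_matching_size I.E > 0" using M kp mp
    by (metis less_le_trans nat_0_less_mult_iff)
  show ?thesis
    by (rule exI[of _ I.V], rule exI[of _ I.E], rule exI[of _ I.evs]) (use M bound pos in \<open>auto intro: order.trans\<close>)
qed

end
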